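(* Let $0<c<1$, $1<t<2$, $0<b<1$, put $a_n=c^{t^n}$ and $F_n(z,w)=(z^2+a_nw,\ a_nz)$ for $n\geq1$. Let $\Omega=\{(z,w)\in\mathbb{C}^2: F_n\circ\cdots\circ F_1(z,w)\to0\}$ and let $K\subseteq\Omega$ be compact. Writing $(z_n,w_n)=F_n\circ\cdots\circ F_1(z,w)$ and $\delta_n=\max\{|z_n|,|w_n|:(z,w)\in K\}$, there exists $n_0$ such that $\delta_{n+k}\leq a_{n+k+1}b^k$ for all $n\geq n_0$ and all $k\geq0$. *)

theory Defs
  imports "HOL-Analysis.Analysis"
begin

definition seqa :: "real \<Rightarrow> real \<Rightarrow> nat \<Rightarrow> real" where
  "seqa c t n = c powr (t ^ n)"

definition Fmap :: "real \<Rightarrow> real \<Rightarrow> nat \<Rightarrow> complex \<times> complex \<Rightarrow> complex \<times> complex" where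
  "Fmap c t n p = ((fst p)^2 + of_real (seqa c t n) * snd p, of_real (seqa c t n) * fst p)"

fun orbit :: "real \<Rightarrow> real \<Rightarrow> nat \<Rightarrow> complex \<times> complex \<Rightarrow> complex \<times> complex" where
  "orbit c t 0 p = p"
| "orbit c t (Suc n) p = Fmap c t (Suc n) (orbit c t n p)"

definition basin :: "real \<Rightarrow> real \<Rightarrow> (complex \<times> complex) set" where
  "basin c t = {p. ((\<lambda>n. orbit c t n p) \<longlongrightarrow> (0, 0)) sequentially}"

end

theory Submission
  imports Defs
begin

definition dd :: "real \<Rightarrow> real \<Rightarrow> nat \<Rightarrow> complex \<times> complex \<Rightarrow> real" where
  "dd c t m p = max (cmod (fst (orbit c t m p))) (cmod (snd (orbit c t m p)))"

lemma seqa_pos: "0 < c \<Longrightarrow> 0 < seqa c t n"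
  by (simp add: seqa_def)

lemma seqa_Suc: "0 < c \<Longrightarrow> seqa c t (Suc n) = seqa c t n powr t"
  by (simp add: seqa_def powr_powr mult.commute)

lemma dd_nonneg: "0 \<le> dd c t m p" by (simp add: dd_def le_max_iff_disj)

lemma dd_step:
  assumes "0 < c"
  shows "dd c t (Suc m) p \<le> (dd c t m p)^2 + seqa c t (Suc m) * dd c t m p"
proof -
  define z where "z = fst (orbit c t m p)"
  define w where "w = snd (orbit c t m p)"
  define a where "a = seqa c t (Suc m)"
  define D where "D = dd c t m p"
  have a0: "a > 0" using seqa_pos[OF assms] a_def by simp
  have zD: "cmod z \<le> D" and wD: "cmod w \<le> D" by (auto simp: D_def dd_def z_def w_def)
  have D0: "0 \<le> D" by (simp add: D_def dd_nonneg)
  have o: "orbit c t (Suc m) p = (z^2 + of_real a * w, of_real a * z)"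
    by (simp add: Fmap_def z_def w_def a_def)
  have 1: "cmod (z^2 + of_real a * w) \<le> D^2 + a * D"
  proof -
    have "cmod (z^2 + of_real a * w) \<le> cmod z ^2 + a * cmod w"
      by (metis a0 abs_of_pos norm_mult norm_of_real norm_power norm_triangle_ineq)
    also have "\<dots> \<le> D^2 + a * D"
      using zD wD a0 by (intro add_mono power_mono mult_left_mono) auto
    finally show ?thesis .
  qed
  have 2: "cmod (of_real a * z) \<le> D^2 + a * D"
  proof -
    have "cmod (of_real a * z) = a * cmod z" using a0 by (simp add: norm_mult)
    also have "\<dots> \<le> a * D" using zD a0 by (simp add: mult_left_mono)
    finally show ?thesis using D0 by (smt (verit) zero_le_power2)
  qed
  show ?thesis using 1 2 o unfolding dd_def[of c t "Suc m"] D_def[symmetric] a_def[symmetric] by simp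
qed

lemma exN1:
  assumes "0 < c" "c < 1" "1 < t" "t < 2" "0 < b"
  shows "\<exists>N. \<forall>m\<ge>N. 2 * seqa c t m powr (2 - t) \<le> b"
proof -
  define L where "L = log c (b/2)"
  obtain N where N: "L / (2 - t) < t ^ N" using real_arch_pow[OF assms(3)] by blast
  have "2 * seqa c t m powr (2 - t) \<le> b" if "m \<ge> N" for m
  proof -
    have "t ^ N \<le> t ^ m" using that assms by (simp add: power_increasing)
    hence "L \<le> t^m * (2 - t)" using N assms
      by (smt (verit) mult_right_mono pos_divide_less_eq)
    hence "c powr (t^m * (2 - t)) \<le> c powr L"
      using assms by (intro powr_mono') auto
    also have "\<dots> = b/2" using assms by (simp add: L_def)
    finally show ?thesis by (simp add: seqa_def powr_powr)
  qed
  thus ?thesis by blast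
qed

lemma step_b:
  assumes "0 < c" "0 < b" "b \<le> 1" "\<forall>m\<ge>N1. 2 * seqa c t m powr (2 - t) \<le> b"
    and "N1 \<le> m" "dd c t m p \<le> seqa c t (Suc m) * x" "0 \<le> x" "x \<le> 1"
  shows "dd c t (Suc m) p \<le> seqa c t (Suc (Suc m)) * (b * x)"
proof -
  define a where "a = seqa c t (Suc m)"
  define D where "D = dd c t m p"
  have a0: "a > 0" using seqa_pos[OF assms(1)] a_def by simp
  have D0: "0 \<le> D" by (simp add: D_def dd_nonneg)
  have Dx: "D \<le> a * x" using assms a_def D_def by simp
  have H: "2 * a powr (2 - t) \<le> b" using assms(4,5) a_def by simp
  have "dd c t (Suc m) p \<le> D^2 + a * D" using dd_step[OF assms(1)] a_def D_def by simp
  also have "\<dots> \<le> (a*x)^2 + a * (a * x)"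
    using Dx D0 a0 by (intro add_mono power_mono mult_left_mono) auto
  also have "\<dots> \<le> 2 * a^2 * x"
  proof -
    have "(a*x)^2 \<le> a^2 * x" using assms(7,8) a0
      by (simp add: power2_eq_square) (metis mult.commute mult_left_le_one_le mult_nonneg_nonneg less_imp_le)
    thus ?thesis by (simp add: power2_eq_square)
  qed
  also have "\<dots> = (2 * a powr (2 - t)) * a powr t * x"
  proof -
    have "a powr (2 - t) * a powr t = a powr 2" using a0 by (simp add: powr_add[symmetric])
    also have "\<dots> = a^2" using a0 by (simp add: powr_numeral)
    finally show ?thesis by (simp add: algebra_simps)
  qed
  also have "\<dots> \<le> b * a powr t * x" using H a0 assms(7)
    by (intro mult_right_mono) auto
  also have "\<dots> = seqa c t (Suc (Suc m)) * (b * x)"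
    using seqa_Suc[OF assms(1), of t "Suc m"] a_def by simp
  finally show ?thesis .
qed

lemma invariance:
  assumes "0 < c" "0 < b" "b \<le> 1" "\<forall>m\<ge>N1. 2 * seqa c t m powr (2 - t) \<le> b"
    and "N1 \<le> m" "dd c t m p \<le> seqa c t (Suc m)"
  shows "dd c t (m + k) p \<le> seqa c t (m + k + 1) * b ^ k"
proof (induction k)
  case 0
  then show ?case using assms by simp
next
  case (Suc k)
  have "dd c t (Suc (m + k)) p \<le> seqa c t (Suc (Suc (m + k))) * (b * b ^ k)"
    using Suc assms by (intro step_b[of c b N1 t]) (auto simp: power_le_one)
  thus ?case by simp
qed

lemma orbit_cont: "continuous_on UNIV (orbit c t m)"
proof (induction m)
  case 0
  then show ?case by (simp add: continuous_on_id')
next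
  case (Suc m)
  have "continuous_on UNIV (\<lambda>p. Fmap c t (Suc m) (orbit c t m p))"
    unfolding Fmap_def using Suc by (intro continuous_intros)
  then show ?case by simp
qed

lemma dd_cont: "continuous_on UNIV (dd c t m)"
  unfolding dd_def[abs_def] using orbit_cont[of c t m] by (intro continuous_intros)

lemma open_V: "open {q. dd c t m q < seqa c t (Suc m)}"
  using open_Collect_less[OF dd_cont continuous_on_const] by simp

lemma exists_good:
  assumes "0 < c" "c < 1" "1 < t" "p \<in> basin c t" "t < 2"
  shows "\<exists>m\<ge>N. dd c t m p < seqa c t (Suc m)"
proof -
  have lim: "((\<lambda>n. orbit c t n p) \<longlongrightarrow> (0, 0)) sequentially" using assms(4) by (simp add: basin_def)
  have "((\<lambda>n. dd c t n p) \<longlongrightarrow> max (cmod (fst (0::complex,0::complex))) (cmod (snd (0::complex,0::complex)))) sequentially"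
    unfolding dd_def by (intro tendsto_intros lim)
  hence "((\<lambda>n. dd c t n p) \<longlongrightarrow> 0) sequentially" by simp
  hence "eventually (\<lambda>n. dd c t n p < 1/4) sequentially"
    by (rule order_tendstoD) simp
  then obtain N2 where N2: "\<And>n. n \<ge> N2 \<Longrightarrow> dd c t n p < 1/4"
    by (auto simp: eventually_sequentially)
  define M where "M = max N N2"
  show ?thesis
  proof (rule ccontr)
    assume "\<not> ?thesis"
    hence ge: "\<And>m. m \<ge> M \<Longrightarrow> seqa c t (Suc m) \<le> dd c t m p" unfolding M_def by force
    define e where "e = dd c t M p"
    have e0: "0 \<le> e" and e1: "2 * e < 1/2" using N2[of M] by (auto simp: e_def M_def dd_nonneg)
    have bound: "2 * dd c t (M + k) p \<le> (2 * e) ^ (2 ^ k)" for k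
    proof (induction k)
      case 0
      then show ?case by (simp add: e_def)
    next
      case (Suc k)
      define D where "D = dd c t (M + k) p"
      have D0: "0 \<le> D" by (simp add: D_def dd_nonneg)
      have aD: "seqa c t (Suc (M + k)) \<le> D" using ge[of "M+k"] D_def by simp
      have "dd c t (Suc (M + k)) p \<le> D^2 + seqa c t (Suc (M + k)) * D"
        using dd_step[OF assms(1)] D_def by simp
      also have "\<dots> \<le> D^2 + D * D" using aD D0 by (simp add: mult_right_mono)
      finally have "2 * dd c t (Suc (M + k)) p \<le> (2 * D)^2" by (simp add: power2_eq_square)
      also have "\<dots> \<le> ((2 * e) ^ (2 ^ k))^2" using Suc D_def D0 by (intro power_mono) auto
      also have "\<dots> = (2 * e) ^ (2 ^ Suc k)" by (metis power_Suc power_mult mult.commute power2_eq_square[symmetric] power_one_right)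
      finally show ?case by simp
    qed
    define A where "A = t ^ (M + 1) * (- ln c) / ln 2"
    have t2: "1 < 2 / t" using assms by simp
    obtain k where k: "A < (2 / t) ^ k" using real_arch_pow[OF t2] by blast
    have tk: "0 < t ^ k" using assms by simp
    have lnc: "ln c < 0" using assms by simp
    have key: "2 ^ k * ln 2 > t ^ (M + 1) * (- ln c) * t ^ k"
    proof -
      have "A * t ^ k < 2 ^ k" using k tk by (simp add: power_divide pos_less_divide_eq)
      thus ?thesis unfolding A_def using tk by (simp add: field_simps)
    qed
    have "seqa c t (M + k + 1) \<le> dd c t (M + k) p" using ge[of "M + k"] by simp
    also have "\<dots> \<le> (2 * e) ^ (2 ^ k)" using bound[of k] e0 e1
      by (smt (verit) dd_nonneg zero_le_power)
    also have "\<dots> \<le> (1/2) ^ (2 ^ k)" using e0 e1 by (intro power_mono) auto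
    finally have le: "seqa c t (M + k + 1) \<le> (1/2) ^ (2 ^ k)" .
    have "ln ((1/2::real) ^ (2 ^ k)) = - (2 ^ k * ln 2)"
      by (simp add: ln_realpow ln_div)
    also have "\<dots> < t ^ (M + k + 1) * ln c"
      using key by (simp add: power_add algebra_simps)
    also have "\<dots> = ln (seqa c t (M + k + 1))" using assms by (simp add: seqa_def ln_powr)
    finally have "(1/2::real) ^ (2 ^ k) < seqa c t (M + k + 1)"
      using seqa_pos[OF assms(1)] by (simp add: ln_less_cancel_iff)
    thus False using le by simp
  qed
qed

theorem lemma4p1:
  fixes c t b :: real and K :: "(complex \<times> complex) set"
  assumes "0 < c" "c < 1" "1 < t" "t < 2" "0 < b" "b < 1"
    and "compact K" "K \<subseteq> basin c t"
  shows "\<exists>n0. \<forall>n\<ge>n0. \<forall>k. \<forall>p\<in>K.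
           max (cmod (fst (orbit c t (n + k) p))) (cmod (snd (orbit c t (n + k) p)))
             \<le> seqa c t (n + k + 1) * b ^ k"
proof -
  obtain N1 where N1: "\<forall>m\<ge>N1. 2 * seqa c t m powr (2 - t) \<le> b"
    using exN1[OF assms(1-5)] by blast
  define V where "V m = {q. dd c t m q < seqa c t (Suc m)}" for m
  have cov: "K \<subseteq> (\<Union>m\<in>{N1..}. V m)"
  proof
    fix p assume "p \<in> K"
    then obtain m where "m \<ge> N1" "dd c t m p < seqa c t (Suc m)"
      using exists_good[OF assms(1,2,3) _ assms(4), of p N1] assms(8) by blast
    thus "p \<in> (\<Union>m\<in>{N1..}. V m)" by (auto simp: V_def)
  qed
  obtain C where C: "C \<subseteq> {N1..}" "finite C" "K \<subseteq> (\<Union>m\<in>C. V m)"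
    using compactE_image[OF assms(7), of "{N1..}" V] cov open_V V_def by metis
  define n0 where "n0 = Max (insert N1 C)"
  have good: "dd c t n p \<le> seqa c t (Suc n)" if nn: "n \<ge> n0" and pK: "p \<in> K" for n p
  proof -
    obtain m where m: "m \<in> C" "p \<in> V m" using C(3) pK by blast
    have mN: "N1 \<le> m" using m C by auto
    have mn: "m \<le> n" using m C nn unfolding n0_def
      by (meson Max_ge finite_insert insertI2 order_trans)
    have "dd c t (m + (n - m)) p \<le> seqa c t (m + (n - m) + 1) * b ^ (n - m)"
      using invariance[OF assms(1,5) _ N1 mN, of p] assms m V_def by auto
    also have "\<dots> \<le> seqa c t (m + (n - m) + 1)"
      using seqa_pos[OF assms(1)] assms
      by (intro mult_left_le) (auto simp: power_le_one less_imp_le)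
    finally show ?thesis using mn by simp
  qed
  have "N1 \<le> n0" unfolding n0_def using C by simp
  show ?thesis
  proof (intro exI allI impI ballI)
    fix n k p assume n: "n0 \<le> n" and p: "p \<in> K"
    have "dd c t (n + k) p \<le> seqa c t (n + k + 1) * b ^ k"
      using invariance[OF assms(1,5) _ N1 _ good[OF n p]] assms \<open>N1 \<le> n0\<close> n by auto
    thus "max (cmod (fst (orbit c t (n + k) p))) (cmod (snd (orbit c t (n + k) p)))
             \<le> seqa c t (n + k + 1) * b ^ k" by (simp add: dd_def)
  qed
qed

end
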